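(* Under any CLC choice model, if a price vector $\mathbf p\in[0,\bar v]^N$ is a local Nash equilibrium, then there exists an ordering $\pi$ of the sellers such that $(\pi,\mathbf p)$ is a valid order-price pair.
   Context: CLC setup. There are $N$ sellers $\mathcal N=\{1,\dots,N\}$, each selling one item, and a unit mass of customers, each buying at most one item. Items have a price attribute (indexed $0$) and $K$ non-price attributes indexed by $\mathcal A=\{1,\dots,K\}$; $\bar{\mathcal A}=\{0\}\cup\mathcal A$. Non-price attribute $k$ takes values in an arbitrary set $\mathcal V^k$; prices lie in $\mathcal V=[0,\bar v]$ for a fixed $\bar v>0$. Seller $i$'s item has fixed non-price attribute values $v_i^k\in\mathcal V^k$ and price $p_i\in\mathcal V$ chosen by seller $i$; $\mathbf p=(p_1,\dots,p_N)$, and $v_i^0:=p_i$. Each customer $c$ has: a strict total order $\succ_c$ on $\bar{\mathcal A}$ (attribute importance); for each attribute $k$ a complete transitive weak preference $\succsim_c^k$ on its value set, with strict part $\succ_c^k$ and indifference $\sim_c^k$ (and $v\sim_c^k v$), where for price $p\succ_c^0p'$ iff $p<p'$ and $p\sim_c^0p'$ iff $p=p'$; a willingness-to-pay $w_c\in[0,\bar v]$; a set $\mathcal C_c\subseteq\mathcal V^1\times\cdots\times\mathcal V^K$ of admissible non-price attribute vectors; and a strict tie-breaking order over sellers. Customer $c$ lexicographically prefers item $i$ to item $j$ if there is an attribute $k$ with $v_i^{k'}\sim_c^{k'}v_j^{k'}$ for all $k'\succ_c k$ and $v_i^k\succ_c^k v_j^k$; if no such $k$ exists, the tie-breaking order decides.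 Under the Consider-then-Choose with Lexicographic Choice (CLC) model, customer $c$ forms the consideration set $\mathcal N_c=\{i\in\mathcal N: p_i\le w_c,\ (v_i^1,\dots,v_i^K)\in\mathcal C_c\}$, buys nothing if it is empty, and otherwise buys the top-ranked item of $\mathcal N_c$ under this lexicographic order (with tie-breaking). An instance of CLC choice is a joint distribution $\mathcal G$ of these customer primitives; the conditional distribution of $w_c$ given the other primitives is assumed to have a Lipschitz continuous density. $D_i(\mathbf p)$ is the probability a customer buys from seller $i$ and $R_i(\mathbf p)=p_iD_i(\mathbf p)$ is seller $i$'s revenue, also written $R_i(p_i,\mathbf p_{-i})$. Local Nash equilibrium (LNE): $\mathbf p$ with $p_i\in\mathcal V$ for all $i$ such that there exist open neighborhoods $\mathcal U_i\subseteq\mathbb R$ with $p_i\in\mathcal U_i$ and $p_i\in\arg\max_{p\in\overline{\mathcal U_i}}R_i(p,\mathbf p_{-i})$ for all $i$ ($\overline{\mathcal U}$ is the closure). Notation: for $\mathcal S\subseteq\mathcal N$, $\mathbf p^{\mathcal S}$ is the price vector keeping the prices of sellers in $\mathcal S$ and setting the prices of all sellers outside $\mathcal S$ to $0$; $p^{\min}(\mathcal S)=\min_{j\in\mathcal S}p_j$, with $p^{\min}(\emptyset)=\bar v$. Valid order-price pair (VOP): a pair $(\pi,\mathbf p)$ where $\pi:[N]\to\mathcal N$ is a bijection ($\pi(l)$ is the seller of rank $l$) and $\mathbf p\in\mathcal V^N$ satisfies (1) $0\le p_{\pi(N)}\le\cdots\le p_{\pi(1)}\le\bar v$, and (2) letting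 $\mathcal S_1=\emptyset$ and $\mathcal S_l=\{\pi(j):j<l\}$, for every $l$ the price $p_{\pi(l)}$ is a local maximum of $p\mapsto R_{\pi(l)}(p,\mathbf p^{\mathcal S_l}_{-\pi(l)})$ on the interval $[0,p^{\min}(\mathcal S_l)]$. *)

theory Defs
  imports "HOL-Probability.Probability"
begin

text \<open>Attributes are indexed 0..K (0 = price); sellers are indexed 1..N.
  imp c a b : attribute a is more important than attribute b for customer c.
  pref c k x y : x is weakly preferred to y for non-price attribute k (k in 1..K).
  adm c : admissible non-price attribute vectors (functions on {1..K}, PiE style).
  tb c i j : seller i is ranked above seller j in the tie-breaking order.\<close>
record 'v cust =
  imp :: "nat \<Rightarrow> nat \<Rightarrow> bool"
  pref :: "nat \<Rightarrow> 'v \<Rightarrow> 'v \<Rightarrow> bool"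
  adm :: "(nat \<Rightarrow> 'v) set"
  tb :: "nat \<Rightarrow> nat \<Rightarrow> bool"

definition strict_total_on :: "'a set \<Rightarrow> ('a \<Rightarrow> 'a \<Rightarrow> bool) \<Rightarrow> bool" where
  "strict_total_on A r \<longleftrightarrow> (\<forall>a\<in>A. \<not> r a a) \<and>
     (\<forall>a\<in>A. \<forall>b\<in>A. \<forall>d\<in>A. r a b \<longrightarrow> r b d \<longrightarrow> r a d) \<and>
     (\<forall>a\<in>A. \<forall>b\<in>A. a \<noteq> b \<longrightarrow> r a b \<or> r b a)"

definition weak_order_on :: "'a set \<Rightarrow> ('a \<Rightarrow> 'a \<Rightarrow> bool) \<Rightarrow> bool" where
  "weak_order_on A r \<longleftrightarrow> (\<forall>a\<in>A. \<forall>b\<in>A. r a b \<or> r b a) \<and>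
     (\<forall>a\<in>A. \<forall>b\<in>A. \<forall>d\<in>A. r a b \<longrightarrow> r b d \<longrightarrow> r a d)"

text \<open>vals i k : value of non-price attribute k of seller i; p i : price of seller i.\<close>
definition att_strict :: "'v cust \<Rightarrow> (nat \<Rightarrow> nat \<Rightarrow> 'v) \<Rightarrow> (nat \<Rightarrow> real) \<Rightarrow> nat \<Rightarrow> nat \<Rightarrow> nat \<Rightarrow> bool" where
  "att_strict c vals p k i j \<longleftrightarrow>
     (if k = 0 then p i < p j
      else pref c k (vals i k) (vals j k) \<and> \<not> pref c k (vals j k) (vals i k))"

definition att_indiff :: "'v cust \<Rightarrow> (nat \<Rightarrow> nat \<Rightarrow> 'v) \<Rightarrow> (nat \<Rightarrow> real) \<Rightarrow> nat \<Rightarrow> nat \<Rightarrow> nat \<Rightarrow> bool" where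
  "att_indiff c vals p k i j \<longleftrightarrow>
     (if k = 0 then p i = p j
      else pref c k (vals i k) (vals j k) \<and> pref c k (vals j k) (vals i k))"

definition lex_pref :: "'v cust \<Rightarrow> nat \<Rightarrow> (nat \<Rightarrow> nat \<Rightarrow> 'v) \<Rightarrow> (nat \<Rightarrow> real) \<Rightarrow> nat \<Rightarrow> nat \<Rightarrow> bool" where
  "lex_pref c K vals p i j \<longleftrightarrow>
     (\<exists>k\<in>{0..K}. (\<forall>k'\<in>{0..K}. imp c k' k \<longrightarrow> att_indiff c vals p k' i j) \<and> att_strict c vals p k i j)"

definition ranks_above :: "'v cust \<Rightarrow> nat \<Rightarrow> (nat \<Rightarrow> nat \<Rightarrow> 'v) \<Rightarrow> (nat \<Rightarrow> real) \<Rightarrow> nat \<Rightarrow> nat \<Rightarrow> bool" where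
  "ranks_above c K vals p i j \<longleftrightarrow>
     lex_pref c K vals p i j \<or>
     (\<not> lex_pref c K vals p i j \<and> \<not> lex_pref c K vals p j i \<and> tb c i j)"

definition consider_set :: "'v cust \<Rightarrow> nat \<Rightarrow> nat \<Rightarrow> (nat \<Rightarrow> nat \<Rightarrow> 'v) \<Rightarrow> real \<Rightarrow> (nat \<Rightarrow> real) \<Rightarrow> nat set" where
  "consider_set c N K vals w p = {i \<in> {1..N}. p i \<le> w \<and> restrict (vals i) {1..K} \<in> adm c}"

definition buys :: "'v cust \<Rightarrow> nat \<Rightarrow> nat \<Rightarrow> (nat \<Rightarrow> nat \<Rightarrow> 'v) \<Rightarrow> real \<Rightarrow> (nat \<Rightarrow> real) \<Rightarrow> nat \<Rightarrow> bool" where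
  "buys c N K vals w p i \<longleftrightarrow> i \<in> consider_set c N K vals w p \<and>
     (\<forall>j\<in>consider_set c N K vals w p. j \<noteq> i \<longrightarrow> ranks_above c K vals p i j)"

text \<open>Joint distribution of customer primitives: marginal Theta of the non-price primitives,
  and conditional density f c of the willingness-to-pay on [0, vb].\<close>
definition cust_meas :: "'v cust measure \<Rightarrow> ('v cust \<Rightarrow> real \<Rightarrow> real) \<Rightarrow> real \<Rightarrow> ('v cust \<times> real) measure" where
  "cust_meas Theta f vb = density (Theta \<Otimes>\<^sub>M lborel)
     (\<lambda>x. ennreal (f (fst x) (snd x) * indicator {0..vb} (snd x)))"

definition buy_set :: "'v cust measure \<Rightarrow> nat \<Rightarrow> nat \<Rightarrow> (nat \<Rightarrow> nat \<Rightarrow> 'v) \<Rightarrow> (nat \<Rightarrow> real) \<Rightarrow> nat \<Rightarrow> ('v cust \<times> real) set" where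
  "buy_set Theta N K vals p i = {x \<in> space (Theta \<Otimes>\<^sub>M lborel). buys (fst x) N K vals (snd x) p i}"

definition demand :: "nat \<Rightarrow> nat \<Rightarrow> (nat \<Rightarrow> nat \<Rightarrow> 'v) \<Rightarrow> 'v cust measure \<Rightarrow> ('v cust \<Rightarrow> real \<Rightarrow> real) \<Rightarrow> real \<Rightarrow> nat \<Rightarrow> (nat \<Rightarrow> real) \<Rightarrow> real" where
  "demand N K vals Theta f vb i p = measure (cust_meas Theta f vb) (buy_set Theta N K vals p i)"

definition revenue :: "nat \<Rightarrow> nat \<Rightarrow> (nat \<Rightarrow> nat \<Rightarrow> 'v) \<Rightarrow> 'v cust measure \<Rightarrow> ('v cust \<Rightarrow> real \<Rightarrow> real) \<Rightarrow> real \<Rightarrow> nat \<Rightarrow> (nat \<Rightarrow> real) \<Rightarrow> real" where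
  "revenue N K vals Theta f vb i p = p i * demand N K vals Theta f vb i p"

definition clc_instance :: "nat \<Rightarrow> nat \<Rightarrow> (nat \<Rightarrow> 'v set) \<Rightarrow> (nat \<Rightarrow> nat \<Rightarrow> 'v) \<Rightarrow> real \<Rightarrow> 'v cust measure \<Rightarrow> ('v cust \<Rightarrow> real \<Rightarrow> real) \<Rightarrow> bool" where
  "clc_instance N K V vals vb Theta f \<longleftrightarrow>
     0 < vb \<and> prob_space Theta \<and>
     (\<forall>i\<in>{1..N}. \<forall>k\<in>{1..K}. vals i k \<in> V k) \<and>
     (\<forall>c\<in>space Theta.
        strict_total_on {0..K} (imp c) \<and>
        (\<forall>k\<in>{1..K}. weak_order_on (V k) (pref c k)) \<and>
        adm c \<subseteq> PiE {1..K} V \<and>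
        strict_total_on {1..N} (tb c)) \<and>
     (\<lambda>x. f (fst x) (snd x)) \<in> borel_measurable (Theta \<Otimes>\<^sub>M lborel) \<and>
     (\<forall>c\<in>space Theta. (\<forall>w\<in>{0..vb}. 0 \<le> f c w) \<and> (f c has_integral 1) {0..vb}) \<and>
     (\<exists>L. \<forall>c\<in>space Theta. L-lipschitz_on {0..vb} (f c)) \<and>
     (\<forall>p i. buy_set Theta N K vals p i \<in> sets (Theta \<Otimes>\<^sub>M lborel))"

definition is_LNE :: "nat \<Rightarrow> real \<Rightarrow> (nat \<Rightarrow> (nat \<Rightarrow> real) \<Rightarrow> real) \<Rightarrow> (nat \<Rightarrow> real) \<Rightarrow> bool" where
  "is_LNE N vb R p \<longleftrightarrow>
     (\<forall>i\<in>{1..N}. p i \<in> {0..vb} \<and>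
        (\<exists>U. open U \<and> p i \<in> U \<and> (\<forall>x\<in>closure U. R i (p(i := x)) \<le> R i p)))"

definition prices_on :: "nat set \<Rightarrow> (nat \<Rightarrow> real) \<Rightarrow> (nat \<Rightarrow> real)" where
  "prices_on S p = (\<lambda>j. if j \<in> S then p j else 0)"

definition pmin :: "real \<Rightarrow> (nat \<Rightarrow> real) \<Rightarrow> nat set \<Rightarrow> real" where
  "pmin vb p S = (if S = {} then vb else Min (p ` S))"

definition is_VOP :: "nat \<Rightarrow> real \<Rightarrow> (nat \<Rightarrow> (nat \<Rightarrow> real) \<Rightarrow> real) \<Rightarrow> (nat \<Rightarrow> nat) \<Rightarrow> (nat \<Rightarrow> real) \<Rightarrow> bool" where
  "is_VOP N vb R \<pi> p \<longleftrightarrow>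
     bij_betw \<pi> {1..N} {1..N} \<and>
     (\<forall>i\<in>{1..N}. p i \<in> {0..vb}) \<and>
     (1 \<le> N \<longrightarrow> 0 \<le> p (\<pi> N) \<and> p (\<pi> 1) \<le> vb) \<and>
     (\<forall>l\<in>{1..<N}. p (\<pi> (Suc l)) \<le> p (\<pi> l)) \<and>
     (\<forall>l\<in>{1..N}.
        \<exists>\<epsilon>>0. \<forall>x\<in>{0..pmin vb p (\<pi> ` {1..<l})}. \<bar>x - p (\<pi> l)\<bar> < \<epsilon> \<longrightarrow>
          R (\<pi> l) ((prices_on (\<pi> ` {1..<l}) p)(\<pi> l := x))
            \<le> R (\<pi> l) ((prices_on (\<pi> ` {1..<l}) p)(\<pi> l := p (\<pi> l))))"

end

theory Submission
  imports Defs
begin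


lemma ranks_sign_cong:
  assumes a1: "(P i < P j) = (Q i < Q j)" and a2: "(P j < P i) = (Q j < Q i)"
    and a3: "(P i = P j) = (Q i = Q j)"
  shows "ranks_above c K vals P i j = ranks_above c K vals Q i j"
proof -
  have e: "(P j = P i) = (Q j = Q i)" using a3 by auto
  have s1: "\<And>a. att_strict c vals P a i j = att_strict c vals Q a i j"
    unfolding att_strict_def by (simp only: a1)
  have s2: "\<And>a. att_strict c vals P a j i = att_strict c vals Q a j i"
    unfolding att_strict_def by (simp only: a2)
  have i1: "\<And>a. att_indiff c vals P a i j = att_indiff c vals Q a i j"
    unfolding att_indiff_def by (simp only: a3)
  have i2: "\<And>a. att_indiff c vals P a j i = att_indiff c vals Q a j i"
    unfolding att_indiff_def by (simp only: e)
  have l1: "lex_pref c K vals P i j = lex_pref c K vals Q i j"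
    unfolding lex_pref_def s1 i1 ..
  have l2: "lex_pref c K vals P j i = lex_pref c K vals Q j i"
    unfolding lex_pref_def s2 i2 ..
  show ?thesis unfolding ranks_above_def l1 l2 ..
qed

lemma lex_witness:
  assumes "k \<in> {0..K}" "\<And>k'. k' \<in> {0..K} \<Longrightarrow> imp c k' k \<Longrightarrow> att_indiff c vals P k' i j"
    "att_strict c vals P k i j"
  shows "lex_pref c K vals P i j"
  unfolding lex_pref_def using assms by blast

lemma lex_mono:
  assumes SI: "strict_total_on {0..K} (imp c)"
    and Qi: "Q i \<le> P i" and Pj: "P j \<le> Q j"
    and L: "lex_pref c K vals P i j"
  shows "lex_pref c K vals Q i j"
proof -
  from L obtain k where k: "k \<in> {0..K}"
    and ind: "\<And>k'. k' \<in> {0..K} \<Longrightarrow> imp c k' k \<Longrightarrow> att_indiff c vals P k' i j"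
    and st: "att_strict c vals P k i j" unfolding lex_pref_def by blast
  have irr: "\<not> imp c 0 0" using SI unfolding strict_total_on_def by auto
  have same: "\<And>k'. k' \<noteq> 0 \<Longrightarrow> att_indiff c vals Q k' i j = att_indiff c vals P k' i j"
    by (simp add: att_indiff_def)
  have ind0: "\<And>k'. k' \<in> {0..K} \<Longrightarrow> imp c k' k \<Longrightarrow> k' \<noteq> 0 \<Longrightarrow> att_indiff c vals Q k' i j"
    using ind same by blast
  have tr: "\<And>x. x \<in> {0..K} \<Longrightarrow> imp c x 0 \<Longrightarrow> imp c 0 k \<Longrightarrow> imp c x k"
  proof -
    fix x assume "x \<in> {0..K}" "imp c x 0" "imp c 0 k"
    moreover have "(0::nat) \<in> {0..K}" by simp
    ultimately show "imp c x k" using SI k unfolding strict_total_on_def by blast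
  qed
  have nz: "\<And>x. imp c x 0 \<Longrightarrow> x \<noteq> 0" using irr by (metis)
  show ?thesis
  proof (cases "k = 0")
    case True
    then have "Q i < Q j" using st Qi Pj by (simp add: att_strict_def)
    then have s0: "att_strict c vals Q 0 i j" by (simp add: att_strict_def)
    show ?thesis
      by (rule lex_witness[OF _ _ s0]) (use ind0 True nz in auto)
  next
    case False
    show ?thesis
    proof (cases "imp c 0 k")
      case True
      have eq: "P i = P j" using ind[of 0] True by (simp add: att_indiff_def)
      show ?thesis
      proof (cases "Q i = Q j")
        case True
        have "att_strict c vals Q k i j" using st \<open>k \<noteq> 0\<close> by (simp add: att_strict_def)
        moreover have "\<And>k'. k' \<in> {0..K} \<Longrightarrow> imp c k' k \<Longrightarrow> att_indiff c vals Q k' i j"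
        proof -
          fix k' assume "k' \<in> {0..K}" "imp c k' k"
          then show "att_indiff c vals Q k' i j"
            using ind0 True by (cases "k' = 0") (auto simp: att_indiff_def)
        qed
        ultimately show ?thesis using k by (intro lex_witness) auto
      next
        case False
        then have "Q i < Q j" using eq Qi Pj by auto
        then have s0: "att_strict c vals Q 0 i j" by (simp add: att_strict_def)
        have "\<And>k'. k' \<in> {0..K} \<Longrightarrow> imp c k' 0 \<Longrightarrow> att_indiff c vals Q k' i j"
          by (metis ind0 tr nz \<open>imp c 0 k\<close>)
        then show ?thesis by (intro lex_witness[OF _ _ s0]) auto
      qed
    next
      case nimp: False
      have "att_strict c vals Q k i j" using st False by (simp add: att_strict_def)
      moreover have "\<And>k'. k' \<in> {0..K} \<Longrightarrow> imp c k' k \<Longrightarrow> att_indiff c vals Q k' i j"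
        by (metis ind0 nimp)
      ultimately show ?thesis using k by (intro lex_witness) auto
    qed
  qed
qed

lemma ranks_mono:
  assumes SI: "strict_total_on {0..K} (imp c)"
    and Qi: "Q i \<le> P i" and Pj: "P j \<le> Q j"
    and R: "ranks_above c K vals P i j"
  shows "ranks_above c K vals Q i j"
proof -
  have a: "lex_pref c K vals P i j \<Longrightarrow> lex_pref c K vals Q i j"
    using lex_mono[OF SI Qi Pj] by blast
  have b: "lex_pref c K vals Q j i \<Longrightarrow> lex_pref c K vals P j i"
    using lex_mono[OF SI Pj Qi] by blast
  show ?thesis using R a b unfolding ranks_above_def by blast
qed

lemma lex_asym:
  assumes SI: "strict_total_on {0..K} (imp c)"
    and L: "lex_pref c K vals P i j"
  shows "\<not> lex_pref c K vals P j i"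
proof
  assume L2: "lex_pref c K vals P j i"
  from L obtain k where k: "k \<in> {0..K}"
    and ind: "\<forall>k'\<in>{0..K}. imp c k' k \<longrightarrow> att_indiff c vals P k' i j"
    and st: "att_strict c vals P k i j" unfolding lex_pref_def by blast
  from L2 obtain k2 where k2: "k2 \<in> {0..K}"
    and ind2: "\<forall>k'\<in>{0..K}. imp c k' k2 \<longrightarrow> att_indiff c vals P k' j i"
    and st2: "att_strict c vals P k2 j i" unfolding lex_pref_def by blast
  have "k = k2 \<or> imp c k k2 \<or> imp c k2 k" using SI k k2 unfolding strict_total_on_def by blast
  then show False
  proof (elim disjE)
    assume "k = k2" then show False using st st2 by (auto simp: att_strict_def split: if_splits)
  next
    assume "imp c k k2"
    then have "att_indiff c vals P k j i" using ind2 k by auto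
    then show False using st by (auto simp: att_strict_def att_indiff_def split: if_splits)
  next
    assume "imp c k2 k"
    then have "att_indiff c vals P k2 i j" using ind k2 by auto
    then show False using st2 by (auto simp: att_strict_def att_indiff_def split: if_splits)
  qed
qed

lemma tb_asym:
  assumes TB: "strict_total_on {1..N} (tb c)" and "i \<in> {1..N}" "j \<in> {1..N}"
    and "tb c i j" shows "\<not> tb c j i"
  using assms unfolding strict_total_on_def by blast

lemma ranks_asym:
  assumes SI: "strict_total_on {0..K} (imp c)" and TB: "strict_total_on {1..N} (tb c)"
    and ij: "i \<in> {1..N}" "j \<in> {1..N}"
    and R: "ranks_above c K vals P i j"
  shows "\<not> ranks_above c K vals P j i"
  using R lex_asym[OF SI, of vals P i j] lex_asym[OF SI, of vals P j i] tb_asym[OF TB ij]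
  unfolding ranks_above_def by blast

lemma ranks_total:
  assumes TB: "strict_total_on {1..N} (tb c)"
    and ij: "i \<in> {1..N}" "j \<in> {1..N}" "i \<noteq> j"
  shows "ranks_above c K vals P i j \<or> ranks_above c K vals P j i"
  using TB ij unfolding ranks_above_def strict_total_on_def by blast



definition struct_ok :: "nat \<Rightarrow> nat \<Rightarrow> (nat \<Rightarrow> 'v set) \<Rightarrow> (nat \<Rightarrow> nat \<Rightarrow> 'v) \<Rightarrow> 'v cust \<Rightarrow> bool" where
  "struct_ok N K V vals c \<longleftrightarrow> strict_total_on {0..K} (imp c) \<and>
     (\<forall>k\<in>{1..K}. weak_order_on (V k) (pref c k)) \<and>
     (\<forall>i\<in>{1..N}. \<forall>k\<in>{1..K}. vals i k \<in> V k) \<and> strict_total_on {1..N} (tb c)"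

lemma wo_trans:
  assumes "weak_order_on A r" "x \<in> A" "y \<in> A" "z \<in> A" "r x y" "r y z"
  shows "r x z"
  using assms unfolding weak_order_on_def by blast

lemma att_trans:
  assumes S: "struct_ok N K V vals c" and a: "a \<in> {0..K}"
    and ijk: "i \<in> {1..N}" "j \<in> {1..N}" "k \<in> {1..N}"
  shows "att_indiff c vals P a i j \<Longrightarrow> att_indiff c vals P a j k \<Longrightarrow> att_indiff c vals P a i k"
    and "att_strict c vals P a i j \<Longrightarrow> att_indiff c vals P a j k \<Longrightarrow> att_strict c vals P a i k"
    and "att_indiff c vals P a i j \<Longrightarrow> att_strict c vals P a j k \<Longrightarrow> att_strict c vals P a i k"
    and "att_strict c vals P a i j \<Longrightarrow> att_strict c vals P a j k \<Longrightarrow> att_strict c vals P a i k"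
proof -
  consider (z) "a = 0" | (nz) "a \<noteq> 0" by blast
  note cs = this
  {
    assume "a = 0"
    then have "att_indiff c vals P a i j \<Longrightarrow> att_indiff c vals P a j k \<Longrightarrow> att_indiff c vals P a i k"
      and "att_strict c vals P a i j \<Longrightarrow> att_indiff c vals P a j k \<Longrightarrow> att_strict c vals P a i k"
      and "att_indiff c vals P a i j \<Longrightarrow> att_strict c vals P a j k \<Longrightarrow> att_strict c vals P a i k"
      and "att_strict c vals P a i j \<Longrightarrow> att_strict c vals P a j k \<Longrightarrow> att_strict c vals P a i k"
      by (simp_all add: att_indiff_def att_strict_def)
  }
  note Z = this
  {
    assume "a \<noteq> 0"
    then have a1: "a \<in> {1..K}" using a by auto
    then have wo: "weak_order_on (V a) (pref c a)" using S unfolding struct_ok_def by auto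
    have V: "vals i a \<in> V a" "vals j a \<in> V a" "vals k a \<in> V a"
      using S ijk a1 unfolding struct_ok_def by auto
    note t = wo_trans[OF wo]
    have t1: "pref c a (vals i a) (vals j a) \<Longrightarrow> pref c a (vals j a) (vals k a) \<Longrightarrow> pref c a (vals i a) (vals k a)"
      by (rule t[OF V(1) V(2) V(3)])
    have t2: "pref c a (vals k a) (vals j a) \<Longrightarrow> pref c a (vals j a) (vals i a) \<Longrightarrow> pref c a (vals k a) (vals i a)"
      by (rule t[OF V(3) V(2) V(1)])
    have t3: "pref c a (vals k a) (vals i a) \<Longrightarrow> pref c a (vals i a) (vals j a) \<Longrightarrow> pref c a (vals k a) (vals j a)"
      by (rule t[OF V(3) V(1) V(2)])
    have t4: "pref c a (vals j a) (vals k a) \<Longrightarrow> pref c a (vals k a) (vals i a) \<Longrightarrow> pref c a (vals j a) (vals i a)"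
      by (rule t[OF V(2) V(3) V(1)])
    have "att_indiff c vals P a i j \<Longrightarrow> att_indiff c vals P a j k \<Longrightarrow> att_indiff c vals P a i k"
      and "att_strict c vals P a i j \<Longrightarrow> att_indiff c vals P a j k \<Longrightarrow> att_strict c vals P a i k"
      and "att_indiff c vals P a i j \<Longrightarrow> att_strict c vals P a j k \<Longrightarrow> att_strict c vals P a i k"
      and "att_strict c vals P a i j \<Longrightarrow> att_strict c vals P a j k \<Longrightarrow> att_strict c vals P a i k"
      using \<open>a \<noteq> 0\<close> t1 t2 t3 t4 by (simp_all add: att_indiff_def att_strict_def; blast)+
  }
  note NZ = this
  show "att_indiff c vals P a i j \<Longrightarrow> att_indiff c vals P a j k \<Longrightarrow> att_indiff c vals P a i k"
    using Z(1) NZ(1) by blast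
  show "att_strict c vals P a i j \<Longrightarrow> att_indiff c vals P a j k \<Longrightarrow> att_strict c vals P a i k"
    using Z(2) NZ(2) by blast
  show "att_indiff c vals P a i j \<Longrightarrow> att_strict c vals P a j k \<Longrightarrow> att_strict c vals P a i k"
    using Z(3) NZ(3) by blast
  show "att_strict c vals P a i j \<Longrightarrow> att_strict c vals P a j k \<Longrightarrow> att_strict c vals P a i k"
    using Z(4) NZ(4) by blast
qed

lemma att_total:
  assumes S: "struct_ok N K V vals c" and a: "a \<in> {0..K}"
    and ij: "i \<in> {1..N}" "j \<in> {1..N}"
    and n: "\<not> att_indiff c vals P a i j"
  shows "att_strict c vals P a i j \<or> att_strict c vals P a j i"
proof (cases "a = 0")
  case True then show ?thesis using n by (auto simp: att_indiff_def att_strict_def)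
next
  case False
  then have a1: "a \<in> {1..K}" using a by auto
  then have wo: "weak_order_on (V a) (pref c a)" using S unfolding struct_ok_def by auto
  have "vals i a \<in> V a" "vals j a \<in> V a" using S ij a1 unfolding struct_ok_def by auto
  then have "pref c a (vals i a) (vals j a) \<or> pref c a (vals j a) (vals i a)"
    using wo unfolding weak_order_on_def by blast
  then show ?thesis using n False by (auto simp: att_indiff_def att_strict_def)
qed

lemma att_indiff_sym: "att_indiff c vals P a i j = att_indiff c vals P a j i"
  by (auto simp: att_indiff_def)

lemma strict_not_indiff: "att_strict c vals P a i j \<Longrightarrow> \<not> att_indiff c vals P a i j"
  by (auto simp: att_indiff_def att_strict_def split: if_splits)

lemma lex_trans:
  assumes S: "struct_ok N K V vals c"
    and ijk: "i \<in> {1..N}" "j \<in> {1..N}" "k \<in> {1..N}"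
    and L1: "lex_pref c K vals P i j" and L2: "lex_pref c K vals P j k"
  shows "lex_pref c K vals P i k"
proof -
  have SI: "strict_total_on {0..K} (imp c)" using S unfolding struct_ok_def by auto
  from L1 obtain a where a: "a \<in> {0..K}"
    and ind: "\<forall>k'\<in>{0..K}. imp c k' a \<longrightarrow> att_indiff c vals P k' i j"
    and st: "att_strict c vals P a i j" unfolding lex_pref_def by blast
  from L2 obtain b where b: "b \<in> {0..K}"
    and ind2: "\<forall>k'\<in>{0..K}. imp c k' b \<longrightarrow> att_indiff c vals P k' j k"
    and st2: "att_strict c vals P b j k" unfolding lex_pref_def by blast
  note T = att_trans[OF S _ ijk, of _ P]
  have "a = b \<or> imp c a b \<or> imp c b a" using SI a b unfolding strict_total_on_def by blast
  then show ?thesis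
  proof (elim disjE)
    assume "a = b"
    then show ?thesis unfolding lex_pref_def using a ind ind2 st st2 T
      by (intro bexI[of _ a]) auto
  next
    assume ab: "imp c a b"
    have "\<forall>k'\<in>{0..K}. imp c k' a \<longrightarrow> att_indiff c vals P k' i k"
    proof (intro ballI impI)
      fix k' assume k': "k' \<in> {0..K}" "imp c k' a"
      then have "imp c k' b" using SI ab a b unfolding strict_total_on_def by blast
      then show "att_indiff c vals P k' i k" using ind ind2 k' T(1) by auto
    qed
    moreover have "att_strict c vals P a i k" using st ind2 ab a T(2) by auto
    ultimately show ?thesis unfolding lex_pref_def using a by blast
  next
    assume ba: "imp c b a"
    have "\<forall>k'\<in>{0..K}. imp c k' b \<longrightarrow> att_indiff c vals P k' i k"
    proof (intro ballI impI)
      fix k' assume k': "k' \<in> {0..K}" "imp c k' b"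
      then have "imp c k' a" using SI ba a b unfolding strict_total_on_def by blast
      then show "att_indiff c vals P k' i k" using ind ind2 k' T(1) by auto
    qed
    moreover have "att_strict c vals P b i k" using st2 ind ba b T(3) by auto
    ultimately show ?thesis unfolding lex_pref_def using b by blast
  qed
qed

lemma incomparable_indiff:
  assumes S: "struct_ok N K V vals c"
    and ij: "i \<in> {1..N}" "j \<in> {1..N}"
    and n1: "\<not> lex_pref c K vals P i j" and n2: "\<not> lex_pref c K vals P j i"
  shows "\<forall>a\<in>{0..K}. att_indiff c vals P a i j"
proof (rule ccontr)
  have SI: "strict_total_on {0..K} (imp c)" using S unfolding struct_ok_def by auto
  assume "\<not> ?thesis"
  then obtain a0 where a0: "a0 \<in> {0..K}" "\<not> att_indiff c vals P a0 i j" by blast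
  define D where "D = {a\<in>{0..K}. \<not> att_indiff c vals P a i j}"
  define m where "m = (\<lambda>a. card {a'\<in>{0..K}. imp c a' a})"
  have "a0 \<in> D" using a0 D_def by auto
  then obtain a where aD: "a \<in> D" and amin: "\<forall>y. y \<in> D \<longrightarrow> m a \<le> m y"
    using ex_has_least_nat[of "\<lambda>x. x \<in> D" a0 m] by blast
  have a: "a \<in> {0..K}" using aD D_def by auto
  have above: "\<forall>k'\<in>{0..K}. imp c k' a \<longrightarrow> att_indiff c vals P k' i j"
  proof (intro ballI impI)
    fix k' assume k': "k' \<in> {0..K}" "imp c k' a"
    show "att_indiff c vals P k' i j"
    proof (rule ccontr)
      assume "\<not> att_indiff c vals P k' i j"
      then have "k' \<in> D" using k' D_def by auto
      then have le: "m a \<le> m k'" using amin by auto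
      have sub: "{a'\<in>{0..K}. imp c a' k'} \<subset> {a'\<in>{0..K}. imp c a' a}"
      proof
        show "{a'\<in>{0..K}. imp c a' k'} \<subseteq> {a'\<in>{0..K}. imp c a' a}"
          using SI k' a unfolding strict_total_on_def by blast
        have "\<not> imp c k' k'" using SI k' unfolding strict_total_on_def by blast
        then show "{a'\<in>{0..K}. imp c a' k'} \<noteq> {a'\<in>{0..K}. imp c a' a}" using k' by blast
      qed
      have "m k' < m a" unfolding m_def by (rule psubset_card_mono[OF _ sub]) auto
      then show False using le by auto
    qed
  qed
  have "att_strict c vals P a i j \<or> att_strict c vals P a j i"
    using att_total[OF S a ij] aD D_def by auto
  then show False
  proof
    assume "att_strict c vals P a i j"
    then show False using n1 above a unfolding lex_pref_def by blast
  next
    assume "att_strict c vals P a j i"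
    then show False using n2 above a att_indiff_sym unfolding lex_pref_def by blast
  qed
qed

lemma lex_indiff_right:
  assumes S: "struct_ok N K V vals c" and ijk: "i \<in> {1..N}" "j \<in> {1..N}" "k \<in> {1..N}"
    and L: "lex_pref c K vals P i j" and I: "\<forall>a\<in>{0..K}. att_indiff c vals P a j k"
  shows "lex_pref c K vals P i k"
  using L I att_trans[OF S _ ijk] unfolding lex_pref_def by blast

lemma lex_indiff_left:
  assumes S: "struct_ok N K V vals c" and ijk: "i \<in> {1..N}" "j \<in> {1..N}" "k \<in> {1..N}"
    and I: "\<forall>a\<in>{0..K}. att_indiff c vals P a i j" and L: "lex_pref c K vals P j k"
  shows "lex_pref c K vals P i k"
  using L I att_trans[OF S _ ijk] unfolding lex_pref_def by blast

lemma indiff_no_lex: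
  assumes "\<forall>a\<in>{0..K}. att_indiff c vals P a i j"
  shows "\<not> lex_pref c K vals P i j"
  using assms strict_not_indiff unfolding lex_pref_def by blast

lemma ranks_trans:
  assumes S: "struct_ok N K V vals c" and ijk: "i \<in> {1..N}" "j \<in> {1..N}" "k \<in> {1..N}"
    and R1: "ranks_above c K vals P i j" and R2: "ranks_above c K vals P j k"
  shows "ranks_above c K vals P i k"
proof -
  have TB: "strict_total_on {1..N} (tb c)" using S unfolding struct_ok_def by auto
  have I1: "\<not> lex_pref c K vals P i j \<Longrightarrow> \<not> lex_pref c K vals P j i \<Longrightarrow> \<forall>a\<in>{0..K}. att_indiff c vals P a i j"
    using incomparable_indiff[OF S ijk(1,2)] by blast
  have I2: "\<not> lex_pref c K vals P j k \<Longrightarrow> \<not> lex_pref c K vals P k j \<Longrightarrow> \<forall>a\<in>{0..K}. att_indiff c vals P a j k"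
    using incomparable_indiff[OF S ijk(2,3)] by blast
  show ?thesis
  proof (cases "lex_pref c K vals P i j")
    case L1: True
    show ?thesis
    proof (cases "lex_pref c K vals P j k")
      case True
      then show ?thesis using lex_trans[OF S ijk L1] unfolding ranks_above_def by blast
    next
      case False
      then have "\<forall>a\<in>{0..K}. att_indiff c vals P a j k" using R2 I2 unfolding ranks_above_def by blast
      then show ?thesis using lex_indiff_right[OF S ijk L1] unfolding ranks_above_def by blast
    qed
  next
    case nL1: False
    then have tij: "tb c i j" and Iij: "\<forall>a\<in>{0..K}. att_indiff c vals P a i j"
      using R1 I1 unfolding ranks_above_def by blast+
    show ?thesis
    proof (cases "lex_pref c K vals P j k")
      case True
      then show ?thesis using lex_indiff_left[OF S ijk Iij] unfolding ranks_above_def by blast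
    next
      case False
      then have tjk: "tb c j k" and Ijk: "\<forall>a\<in>{0..K}. att_indiff c vals P a j k"
        using R2 I2 unfolding ranks_above_def by blast+
      have Iik: "\<forall>a\<in>{0..K}. att_indiff c vals P a i k" using Iij Ijk att_trans[OF S _ ijk] by blast
      have Iki: "\<forall>a\<in>{0..K}. att_indiff c vals P a k i" using Iik att_indiff_sym by blast
      have "tb c i k" using TB tij tjk ijk unfolding strict_total_on_def by blast
      then show ?thesis using indiff_no_lex[OF Iik] indiff_no_lex[OF Iki] unfolding ranks_above_def by blast
    qed
  qed
qed



lemma clc_struct:
  assumes "clc_instance N K V vals vb Theta f" "c \<in> space Theta"
  shows "struct_ok N K V vals c"
  using assms unfolding clc_instance_def struct_ok_def by blast

lemma clc_finite:
  assumes C: "clc_instance N K V vals vb Theta f"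
  shows "finite_measure (cust_meas Theta f vb)"
proof -
  have P: "prob_space Theta" using C unfolding clc_instance_def by blast
  have fm: "(\<lambda>x. f (fst x) (snd x)) \<in> borel_measurable (Theta \<Otimes>\<^sub>M lborel)"
    using C unfolding clc_instance_def by blast
  have nn: "\<And>c w. c \<in> space Theta \<Longrightarrow> w \<in> {0..vb} \<Longrightarrow> 0 \<le> f c w"
    and int: "\<And>c. c \<in> space Theta \<Longrightarrow> (f c has_integral 1) {0..vb}"
    using C unfolding clc_instance_def by blast+
  define g where "g = (\<lambda>x. ennreal (f (fst x) (snd x) * indicator {0..vb} (snd x)))"
  have gm: "g \<in> borel_measurable (Theta \<Otimes>\<^sub>M lborel)"
    unfolding g_def using fm by measurable
  have inner: "(\<integral>\<^sup>+ w. g (c, w) \<partial>lborel) = 1" if c: "c \<in> space Theta" for c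
  proof -
    define h where "h = (\<lambda>w. f c w * indicator {0..vb} w)"
    have hm: "h \<in> borel_measurable borel"
    proof -
      have "(\<lambda>w. (c, w)) \<in> measurable lborel (Theta \<Otimes>\<^sub>M lborel)"
        using c by (auto intro!: measurable_Pair)
      from measurable_comp[OF this fm] have "(\<lambda>w. f c w) \<in> borel_measurable lborel"
        by (simp add: comp_def)
      then have "(\<lambda>w. f c w) \<in> borel_measurable borel" by simp
      then show ?thesis unfolding h_def by measurable
    qed
    have hn: "\<And>w. 0 \<le> h w" unfolding h_def using nn[OF c] by (simp add: indicator_def)
    have "((\<lambda>w. if w \<in> {0..vb} then f c w else 0) has_integral 1) UNIV"
      using int[OF c] by (simp only: has_integral_restrict_UNIV)
    moreover have "(\<lambda>w. if w \<in> {0..vb} then f c w else 0) = h"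
      unfolding h_def by (auto simp: indicator_def)
    ultimately have hi: "(h has_integral 1) UNIV" by simp
    have "(\<integral>\<^sup>+ w. ennreal (h w) \<partial>lborel) = 1" using nn_integral_has_integral_lborel[OF hm hn hi] by simp
    then show ?thesis unfolding g_def h_def by simp
  qed
  have "emeasure (cust_meas Theta f vb) (space (cust_meas Theta f vb))
      = (\<integral>\<^sup>+ x. g x * indicator (space (Theta \<Otimes>\<^sub>M lborel)) x \<partial>(Theta \<Otimes>\<^sub>M lborel))"
    unfolding cust_meas_def g_def[symmetric]
    by (simp only: space_density emeasure_density[OF gm sets.top])
  also have "\<dots> = (\<integral>\<^sup>+ x. g x \<partial>(Theta \<Otimes>\<^sub>M lborel))"
    by (rule nn_integral_cong) simp
  also have "\<dots> = (\<integral>\<^sup>+ c. \<integral>\<^sup>+ w. g (c, w) \<partial>lborel \<partial>Theta)"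
    by (rule lborel.nn_integral_fst[OF gm, symmetric])
  also have "\<dots> = (\<integral>\<^sup>+ c. 1 \<partial>Theta)"
    by (rule nn_integral_cong) (simp add: inner)
  also have "\<dots> = 1" using prob_space.emeasure_space_1[OF P] by simp
  finally show ?thesis by (intro finite_measureI) simp
qed

lemma sets_cust_meas: "sets (cust_meas Theta f vb) = sets (Theta \<Otimes>\<^sub>M lborel)"
  unfolding cust_meas_def by simp

lemma buy_set_meas:
  assumes C: "clc_instance N K V vals vb Theta f"
  shows "buy_set Theta N K vals P i \<in> sets (cust_meas Theta f vb)"
  using C unfolding clc_instance_def sets_cust_meas by blast

lemma demand_mono:
  assumes C: "clc_instance N K V vals vb Theta f"
    and sub: "buy_set Theta N K vals P i \<subseteq> buy_set Theta N K vals Q j"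
  shows "demand N K vals Theta f vb i P \<le> demand N K vals Theta f vb j Q"
proof -
  interpret finite_measure "cust_meas Theta f vb" by (rule clc_finite[OF C])
  show ?thesis unfolding demand_def
    by (rule finite_measure_mono[OF sub buy_set_meas[OF C]])
qed

lemma buys_mono:
  assumes S: "struct_ok N K V vals c" and Qi: "Q i \<le> P i"
    and Pj: "\<And>j. j \<in> {1..N} \<Longrightarrow> j \<noteq> i \<Longrightarrow> P j \<le> Q j"
    and B: "buys c N K vals w P i"
  shows "buys c N K vals w Q i"
proof -
  have SI: "strict_total_on {0..K} (imp c)" using S unfolding struct_ok_def by auto
  from B have i: "i \<in> {1..N}" "P i \<le> w" "restrict (vals i) {1..K} \<in> adm c"
    and R: "\<And>j. j \<in> consider_set c N K vals w P \<Longrightarrow> j \<noteq> i \<Longrightarrow> ranks_above c K vals P i j"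
    unfolding buys_def consider_set_def by auto
  have "i \<in> consider_set c N K vals w Q" using i Qi unfolding consider_set_def by auto
  moreover have "ranks_above c K vals Q i j" if j: "j \<in> consider_set c N K vals w Q" "j \<noteq> i" for j
  proof -
    have jN: "j \<in> {1..N}" "Q j \<le> w" "restrict (vals j) {1..K} \<in> adm c"
      using j unfolding consider_set_def by auto
    have "P j \<le> Q j" using Pj jN j by auto
    then have "j \<in> consider_set c N K vals w P" using jN unfolding consider_set_def by auto
    then have "ranks_above c K vals P i j" using R j by auto
    then show ?thesis using ranks_mono[OF SI Qi \<open>P j \<le> Q j\<close>] by blast
  qed
  ultimately show ?thesis unfolding buys_def by blast
qed

lemma buy_set_mono:
  assumes C: "clc_instance N K V vals vb Theta f" and Qi: "Q i \<le> P i"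
    and Pj: "\<And>j. j \<in> {1..N} \<Longrightarrow> j \<noteq> i \<Longrightarrow> P j \<le> Q j"
  shows "buy_set Theta N K vals P i \<subseteq> buy_set Theta N K vals Q i"
proof
  fix x assume x: "x \<in> buy_set Theta N K vals P i"
  then have sp: "x \<in> space (Theta \<Otimes>\<^sub>M lborel)" and b: "buys (fst x) N K vals (snd x) P i"
    unfolding buy_set_def by auto
  have "fst x \<in> space Theta" using sp by (auto simp: space_pair_measure)
  then have S: "struct_ok N K V vals (fst x)" by (rule clc_struct[OF C])
  show "x \<in> buy_set Theta N K vals Q i"
    using buys_mono[OF S Qi Pj b] sp unfolding buy_set_def by auto
qed



lemma ranks_val_cong:
  "P i = Q i \<Longrightarrow> P j = Q j \<Longrightarrow> ranks_above c K vals P i j = ranks_above c K vals Q i j"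
  by (rule ranks_sign_cong) auto

lemma sort_perm:
  fixes p :: "nat \<Rightarrow> real"
  shows "\<exists>\<pi>. bij_betw \<pi> {1..N} {1..N} \<and>
    (\<forall>l m. l \<in> {1..N} \<longrightarrow> m \<in> {1..N} \<longrightarrow> l \<le> m \<longrightarrow> p (\<pi> m) \<le> p (\<pi> l))"
proof -
  define xs where "xs = sort_key (\<lambda>j. - p j) [1..<Suc N]"
  have len: "length xs = N" and dist: "distinct xs" and st: "set xs = {1..N}"
    and so: "sorted (map (\<lambda>j. - p j) xs)" unfolding xs_def by auto
  have b1: "bij_betw (\<lambda>l. l - 1) {1..N} {..<N}"
    by (rule bij_betw_byWitness[where f'=Suc]) auto
  have b2: "bij_betw ((!) xs) {..<N} {1..N}"
    by (rule bij_betw_nth) (use dist len st in auto)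
  have b: "bij_betw ((!) xs \<circ> (\<lambda>l. l - 1)) {1..N} {1..N}" by (rule bij_betw_trans[OF b1 b2])
  moreover have "\<forall>l m. l \<in> {1..N} \<longrightarrow> m \<in> {1..N} \<longrightarrow> l \<le> m \<longrightarrow>
      p (((!) xs \<circ> (\<lambda>l. l - 1)) m) \<le> p (((!) xs \<circ> (\<lambda>l. l - 1)) l)"
  proof (intro allI impI)
    fix l m :: nat assume "l \<in> {1..N}" "m \<in> {1..N}" "l \<le> m"
    then have "map (\<lambda>j. - p j) xs ! (l - 1) \<le> map (\<lambda>j. - p j) xs ! (m - 1)"
      using len by (intro sorted_nth_mono[OF so]) auto
    then show "p (((!) xs \<circ> (\<lambda>l. l - 1)) m) \<le> p (((!) xs \<circ> (\<lambda>l. l - 1)) l)"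
      using len \<open>l \<in> {1..N}\<close> \<open>m \<in> {1..N}\<close> by auto
  qed
  ultimately show ?thesis by blast
qed

lemma buy_setD:
  assumes C: "clc_instance N K V vals vb Theta f" and x: "x \<in> buy_set Theta N K vals P i"
  shows "struct_ok N K V vals (fst x)" "buys (fst x) N K vals (snd x) P i"
    "x \<in> space (Theta \<Otimes>\<^sub>M lborel)"
proof -
  show sp: "x \<in> space (Theta \<Otimes>\<^sub>M lborel)" and "buys (fst x) N K vals (snd x) P i"
    using x unfolding buy_set_def by auto
  have "fst x \<in> space Theta" using sp by (auto simp: space_pair_measure)
  then show "struct_ok N K V vals (fst x)" by (rule clc_struct[OF C])
qed

lemma steal_set:
  assumes S: "struct_ok N K V vals c"
    and ij: "i \<in> {1..N}" "j \<in> {1..N}" "i \<noteq> j" and eq: "p i = p j"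
    and y: "y < p i"
    and b1: "buys c N K vals w p i" and b2: "\<not> buys c N K vals w (p(j := 0)) i"
    and pos: "0 < p i"
  shows "buys c N K vals w (p(j := y)) j"
proof -
  let ?cs = "consider_set c N K vals w"
  have TB: "strict_total_on {1..N} (tb c)" using S unfolding struct_ok_def by auto
  from b1 have iw: "p i \<le> w" "restrict (vals i) {1..K} \<in> adm c"
    and R: "\<And>k. k \<in> ?cs p \<Longrightarrow> k \<noteq> i \<Longrightarrow> ranks_above c K vals p i k"
    unfolding buys_def consider_set_def by auto
  have "i \<in> ?cs (p(j := 0))" using iw ij unfolding consider_set_def by auto
  with b2 obtain k where k: "k \<in> ?cs (p(j := 0))" "k \<noteq> i" "\<not> ranks_above c K vals (p(j := 0)) i k"
    unfolding buys_def by blast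
  have kj: "k = j"
  proof (rule ccontr)
    assume "k \<noteq> j"
    then have "k \<in> ?cs p" using k(1) unfolding consider_set_def by auto
    then have "ranks_above c K vals p i k" using R k(2) by auto
    moreover have "ranks_above c K vals p i k = ranks_above c K vals (p(j := 0)) i k"
      using \<open>k \<noteq> j\<close> ij by (intro ranks_val_cong) auto
    ultimately show False using k(3) by simp
  qed
  have adj: "restrict (vals j) {1..K} \<in> adm c" using k(1) kj unfolding consider_set_def by auto
  have "ranks_above c K vals (p(j := y)) i j = ranks_above c K vals (p(j := 0)) i j"
    using ij y pos by (intro ranks_sign_cong) auto
  then have "\<not> ranks_above c K vals (p(j := y)) i j" using k(3) kj by simp
  then have Rji: "ranks_above c K vals (p(j := y)) j i" using ranks_total[OF TB ij] by blast
  have "j \<in> ?cs (p(j := y))" using ij adj y iw unfolding consider_set_def by auto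
  moreover have "ranks_above c K vals (p(j := y)) j k'" if k': "k' \<in> ?cs (p(j := y))" "k' \<noteq> j" for k'
  proof (cases "k' = i")
    case True then show ?thesis using Rji by simp
  next
    case False
    have k'N: "k' \<in> {1..N}" using k' unfolding consider_set_def by auto
    have "k' \<in> ?cs p" using k' unfolding consider_set_def by auto
    then have "ranks_above c K vals p i k'" using R False by auto
    moreover have "ranks_above c K vals p i k' = ranks_above c K vals (p(j := y)) i k'"
      using k'(2) ij by (intro ranks_val_cong) auto
    ultimately have "ranks_above c K vals (p(j := y)) i k'" by simp
    then show ?thesis using ranks_trans[OF S ij(2) ij(1) k'N Rji] by blast
  qed
  ultimately show ?thesis unfolding buys_def by blast
qed

lemma buys_disj:
  assumes S: "struct_ok N K V vals c" and ij: "i \<noteq> j"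
    and b1: "buys c N K vals w P i" and b2: "buys c N K vals w P j"
  shows False
proof -
  have SI: "strict_total_on {0..K} (imp c)" and TB: "strict_total_on {1..N} (tb c)"
    using S unfolding struct_ok_def by auto
  have ci: "i \<in> consider_set c N K vals w P" and cj: "j \<in> consider_set c N K vals w P"
    using b1 b2 unfolding buys_def by auto
  then have iN: "i \<in> {1..N}" "j \<in> {1..N}" unfolding consider_set_def by auto
  have "ranks_above c K vals P i j" using b1 cj ij unfolding buys_def by auto
  moreover have "ranks_above c K vals P j i" using b2 ci ij unfolding buys_def by auto
  ultimately show False using ranks_asym[OF SI TB iN] by blast
qed



lemma LNE_ball:
  assumes L: "is_LNE N vb R p" and i: "i \<in> {1..N}"
  shows "\<exists>e>0. \<forall>x. \<bar>x - p i\<bar> < e \<longrightarrow> R i (p(i := x)) \<le> R i p"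
proof -
  from L i obtain U where U: "open U" "p i \<in> U" "\<forall>x\<in>closure U. R i (p(i := x)) \<le> R i p"
    unfolding is_LNE_def by blast
  from U(1,2) obtain e where e: "e > 0" "\<forall>x. dist x (p i) < e \<longrightarrow> x \<in> U"
    unfolding open_dist by blast
  have "\<forall>x. \<bar>x - p i\<bar> < e \<longrightarrow> R i (p(i := x)) \<le> R i p"
    using e U(3) closure_subset by (auto simp: dist_real_def)
  then show ?thesis using e(1) by blast
qed

lemma steal:
  assumes C: "clc_instance N K V vals vb Theta f"
    and L: "is_LNE N vb (revenue N K vals Theta f vb) p"
    and ij: "i \<in> {1..N}" "j \<in> {1..N}" "i \<noteq> j" and eq: "p i = p j" and pos: "0 < p i"
  shows "measure (cust_meas Theta f vb)
     (buy_set Theta N K vals p i - buy_set Theta N K vals (p(j := 0)) i) = 0"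
proof -
  let ?M = "cust_meas Theta f vb"
  interpret finite_measure ?M by (rule clc_finite[OF C])
  define W where "W = buy_set Theta N K vals p i - buy_set Theta N K vals (p(j := 0)) i"
  define q where "q = p i"
  define D where "D = demand N K vals Theta f vb j p"
  define m where "m = measure ?M W"
  have Wm: "W \<in> sets ?M" unfolding W_def using buy_set_meas[OF C] by blast
  have m0: "0 \<le> m" unfolding m_def by simp
  have key: "y * (D + m) \<le> y * demand N K vals Theta f vb j (p(j := y))"
    if y: "0 < y" "y < q" for y
  proof -
    have sub1: "W \<subseteq> buy_set Theta N K vals (p(j := y)) j"
    proof
      fix x assume "x \<in> W"
      then have x1: "x \<in> buy_set Theta N K vals p i" and x2: "x \<notin> buy_set Theta N K vals (p(j := 0)) i"
        unfolding W_def by auto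
      note d = buy_setD[OF C x1]
      have "\<not> buys (fst x) N K vals (snd x) (p(j := 0)) i"
        using x2 d(3) unfolding buy_set_def by auto
      then have "buys (fst x) N K vals (snd x) (p(j := y)) j"
        using steal_set[OF d(1) ij eq _ d(2) _ pos] y q_def by auto
      then show "x \<in> buy_set Theta N K vals (p(j := y)) j" using d(3) unfolding buy_set_def by auto
    qed
    have sub2: "buy_set Theta N K vals p j \<subseteq> buy_set Theta N K vals (p(j := y)) j"
      by (rule buy_set_mono[OF C]) (use y q_def eq in auto)
    have disj: "W \<inter> buy_set Theta N K vals p j = {}"
    proof (rule ccontr)
      assume "W \<inter> buy_set Theta N K vals p j \<noteq> {}"
      then obtain x where x: "x \<in> buy_set Theta N K vals p i" "x \<in> buy_set Theta N K vals p j"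
        unfolding W_def by blast
      show False using buys_disj[OF buy_setD(1)[OF C x(1)] ij(3) buy_setD(2)[OF C x(1)] buy_setD(2)[OF C x(2)]] .
    qed
    have "D + m = measure ?M (buy_set Theta N K vals p j \<union> W)"
      unfolding D_def m_def demand_def
      by (rule finite_measure_Union[symmetric]) (use Wm buy_set_meas[OF C] disj in auto)
    also have "\<dots> \<le> demand N K vals Theta f vb j (p(j := y))"
      unfolding demand_def
      by (rule finite_measure_mono) (use sub1 sub2 buy_set_meas[OF C] in auto)
    finally show ?thesis using y by (simp add: mult_left_mono)
  qed
  obtain e where e: "e > 0" "\<forall>x. \<bar>x - p j\<bar> < e \<longrightarrow>
      revenue N K vals Theta f vb j (p(j := x)) \<le> revenue N K vals Theta f vb j p"
    using LNE_ball[OF L ij(2)] by blast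
  have ev: "eventually (\<lambda>y. y * (D + m) - q * D \<le> 0) (at_left q)"
  proof -
    have "eventually (\<lambda>y. y \<in> {max 0 (q - e)<..<q}) (at_left q)"
      by (rule eventually_at_left_real) (use e(1) pos q_def in auto)
    then show ?thesis
    proof (rule eventually_mono)
      fix y assume y: "y \<in> {max 0 (q - e)<..<q}"
      then have "y * (D + m) \<le> y * demand N K vals Theta f vb j (p(j := y))"
        using key by auto
      also have "\<dots> = revenue N K vals Theta f vb j (p(j := y))"
        unfolding revenue_def by simp
      also have "\<dots> \<le> revenue N K vals Theta f vb j p"
        using e(2) y eq q_def by auto
      also have "\<dots> = q * D" unfolding revenue_def D_def q_def eq ..
      finally show "y * (D + m) - q * D \<le> 0" by simp
    qed
  qed
  have lim: "((\<lambda>y. y * (D + m) - q * D) \<longlongrightarrow> q * (D + m) - q * D) (at_left q)"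
    by (intro tendsto_intros)
  have "q * (D + m) - q * D \<le> 0"
    by (rule tendsto_upperbound[OF lim ev]) simp
  then have "q * m \<le> 0" by (simp add: algebra_simps)
  then have "m \<le> 0" using pos q_def by (simp add: mult_le_0_iff)
  then show ?thesis using m0 unfolding m_def W_def by simp
qed



lemma tie_demand:
  assumes C: "clc_instance N K V vals vb Theta f"
    and L: "is_LNE N vb (revenue N K vals Theta f vb) p"
    and i: "i \<in> {1..N}" and iS: "i \<notin> S"
    and hiS: "\<And>j. j \<in> {1..N} \<Longrightarrow> p i < p j \<Longrightarrow> j \<in> S"
    and pos: "0 < p i"
  shows "demand N K vals Theta f vb i ((prices_on S p)(i := p i)) = demand N K vals Theta f vb i p"
proof -
  let ?M = "cust_meas Theta f vb"
  interpret finite_measure ?M by (rule clc_finite[OF C])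
  let ?P = "(prices_on S p)(i := p i)"
  let ?B = "\<lambda>Q k. buy_set Theta N K vals Q k"
  have nn: "\<And>j. j \<in> {1..N} \<Longrightarrow> 0 \<le> p j" using L unfolding is_LNE_def by auto
  have sub: "?B ?P i \<subseteq> ?B p i"
    by (rule buy_set_mono[OF C]) (auto simp: prices_on_def nn)
  define J where "J = {j \<in> {1..N}. j \<noteq> i \<and> p j = p i}"
  have fJ: "finite J" unfolding J_def by auto
  have diff: "?B p i - ?B ?P i \<subseteq> (\<Union>j\<in>J. ?B p i - ?B (p(j := 0)) i)"
  proof
    fix x assume "x \<in> ?B p i - ?B ?P i"
    then have x1: "x \<in> ?B p i" and x2: "x \<notin> ?B ?P i" by auto
    note d = buy_setD[OF C x1]
    define c where "c = fst x"
    define w where "w = snd x"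
    let ?cs = "consider_set c N K vals w"
    have S: "struct_ok N K V vals c" using d(1) c_def by simp
    have b: "buys c N K vals w p i" using d(2) c_def w_def by simp
    have nb: "\<not> buys c N K vals w ?P i" using x2 d(3) c_def w_def unfolding buy_set_def by auto
    from b have iw: "p i \<le> w" "restrict (vals i) {1..K} \<in> adm c"
      and R: "\<And>k. k \<in> ?cs p \<Longrightarrow> k \<noteq> i \<Longrightarrow> ranks_above c K vals p i k"
      unfolding buys_def consider_set_def by auto
    have "i \<in> ?cs ?P" using iw i unfolding consider_set_def by auto
    with nb obtain k where k: "k \<in> ?cs ?P" "k \<noteq> i" "\<not> ranks_above c K vals ?P i k"
      unfolding buys_def by blast
    have kN: "k \<in> {1..N}" and kadm: "restrict (vals k) {1..K} \<in> adm c"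
      using k(1) unfolding consider_set_def by auto
    have kS: "k \<notin> S"
    proof
      assume "k \<in> S"
      then have "?P k = p k" using k(2) by (simp add: prices_on_def)
      then have "k \<in> ?cs p" using k(1) unfolding consider_set_def by auto
      then have "ranks_above c K vals p i k" using R k(2) by auto
      moreover have "ranks_above c K vals p i k = ranks_above c K vals ?P i k"
        using \<open>?P k = p k\<close> by (intro ranks_val_cong) auto
      ultimately show False using k(3) by simp
    qed
    then have Pk: "?P k = 0" using k(2) by (simp add: prices_on_def)
    have "p k \<le> p i" using hiS[OF kN] kS by force
    have pk: "p k = p i"
    proof (rule ccontr)
      assume "p k \<noteq> p i"
      then have lt: "p k < p i" using \<open>p k \<le> p i\<close> by simp
      have "k \<in> ?cs p" using kN kadm lt iw unfolding consider_set_def by auto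
      then have "ranks_above c K vals p i k" using R k(2) by auto
      moreover have "ranks_above c K vals p i k = ranks_above c K vals ?P i k"
        using Pk lt pos nn[OF kN] by (intro ranks_sign_cong) auto
      ultimately show False using k(3) by simp
    qed
    have kJ: "k \<in> J" unfolding J_def using kN k(2) pk by auto
    have "\<not> buys c N K vals w (p(k := 0)) i"
    proof
      assume bb: "buys c N K vals w (p(k := 0)) i"
      have "k \<in> ?cs (p(k := 0))" using kN kadm iw pos unfolding consider_set_def by auto
      then have "ranks_above c K vals (p(k := 0)) i k" using bb k(2) unfolding buys_def by auto
      moreover have "ranks_above c K vals (p(k := 0)) i k = ranks_above c K vals ?P i k"
        using Pk k(2) by (intro ranks_val_cong) auto
      ultimately show False using k(3) by simp
    qed
    then have "x \<notin> ?B (p(k := 0)) i" unfolding buy_set_def c_def w_def by auto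
    then show "x \<in> (\<Union>j\<in>J. ?B p i - ?B (p(j := 0)) i)" using kJ x1 by blast
  qed
  have null: "measure ?M (\<Union>j\<in>J. ?B p i - ?B (p(j := 0)) i) = 0"
  proof -
    have "measure ?M (\<Union>j\<in>J. ?B p i - ?B (p(j := 0)) i) \<le> (\<Sum>j\<in>J. measure ?M (?B p i - ?B (p(j := 0)) i))"
      by (rule finite_measure_subadditive_finite[OF fJ]) (use buy_set_meas[OF C] in auto)
    also have "\<dots> = 0"
    proof (rule sum.neutral, rule ballI)
      fix j assume "j \<in> J"
      then show "measure ?M (?B p i - ?B (p(j := 0)) i) = 0"
        unfolding J_def using steal[OF C L i _ _ _ pos] by auto
    qed
    finally have le0: "measure ?M (\<Union>j\<in>J. ?B p i - ?B (p(j := 0)) i) \<le> 0" .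
    show ?thesis using le0 measure_nonneg[of ?M "\<Union>j\<in>J. ?B p i - ?B (p(j := 0)) i"] by linarith
  qed
  have "measure ?M (?B p i - ?B ?P i) \<le> measure ?M (\<Union>j\<in>J. ?B p i - ?B (p(j := 0)) i)"
    by (rule finite_measure_mono[OF diff], intro sets.finite_UN fJ sets.Diff buy_set_meas[OF C])
  then have z: "measure ?M (?B p i - ?B ?P i) = 0"
    using null measure_nonneg[of ?M "?B p i - ?B ?P i"] by linarith
  have "measure ?M (?B p i - ?B ?P i) = measure ?M (?B p i) - measure ?M (?B ?P i)"
    by (rule finite_measure_Diff) (use buy_set_meas[OF C] sub in auto)
  then show ?thesis using z unfolding demand_def by simp
qed

lemma vop_local:
  assumes C: "clc_instance N K V vals vb Theta f"
    and L: "is_LNE N vb (revenue N K vals Theta f vb) p"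
    and i: "i \<in> {1..N}" and iS: "i \<notin> S"
    and hiS: "\<And>j. j \<in> {1..N} \<Longrightarrow> p i < p j \<Longrightarrow> j \<in> S"
  shows "\<exists>\<epsilon>>0. \<forall>x\<in>{0..pm}. \<bar>x - p i\<bar> < \<epsilon> \<longrightarrow>
     revenue N K vals Theta f vb i ((prices_on S p)(i := x))
       \<le> revenue N K vals Theta f vb i ((prices_on S p)(i := p i))"
proof -
  let ?R = "revenue N K vals Theta f vb"
  have nn: "\<And>j. j \<in> {1..N} \<Longrightarrow> 0 \<le> p j" using L unfolding is_LNE_def by auto
  obtain e where e: "e > 0" "\<forall>x. \<bar>x - p i\<bar> < e \<longrightarrow> ?R i (p(i := x)) \<le> ?R i p"
    using LNE_ball[OF L i] by blast
  have eqR: "?R i p = ?R i ((prices_on S p)(i := p i))"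
  proof (cases "p i = 0")
    case True then show ?thesis unfolding revenue_def by simp
  next
    case False
    then have "0 < p i" using nn[OF i] by simp
    then show ?thesis unfolding revenue_def using tie_demand[OF C L i iS hiS] by simp
  qed
  have "\<forall>x\<in>{0..pm}. \<bar>x - p i\<bar> < e \<longrightarrow> ?R i ((prices_on S p)(i := x)) \<le> ?R i ((prices_on S p)(i := p i))"
  proof (intro ballI impI)
    fix x assume x: "x \<in> {0..pm}" "\<bar>x - p i\<bar> < e"
    have "demand N K vals Theta f vb i ((prices_on S p)(i := x)) \<le> demand N K vals Theta f vb i (p(i := x))"
      by (rule demand_mono[OF C], rule buy_set_mono[OF C]) (auto simp: prices_on_def nn)
    then have "?R i ((prices_on S p)(i := x)) \<le> ?R i (p(i := x))"
      unfolding revenue_def using x(1) by (simp add: mult_left_mono)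
    also have "\<dots> \<le> ?R i p" using e(2) x(2) by auto
    finally show "?R i ((prices_on S p)(i := x)) \<le> ?R i ((prices_on S p)(i := p i))" using eqR by simp
  qed
  then show ?thesis using e(1) by blast
qed

theorem theorem4p2:
  fixes N K :: nat and V :: "nat \<Rightarrow> 'v set" and vals :: "nat \<Rightarrow> nat \<Rightarrow> 'v"
    and vb :: real and Theta :: "'v cust measure" and f :: "'v cust \<Rightarrow> real \<Rightarrow> real"
    and p :: "nat \<Rightarrow> real"
  assumes "clc_instance N K V vals vb Theta f"
    and "is_LNE N vb (revenue N K vals Theta f vb) p"
  shows "\<exists>\<pi>. is_VOP N vb (revenue N K vals Theta f vb) \<pi> p"
proof -
  note C = assms(1) and L = assms(2)
  obtain \<pi> where b: "bij_betw \<pi> {1..N} {1..N}"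
    and mono: "\<forall>l m. l \<in> {1..N} \<longrightarrow> m \<in> {1..N} \<longrightarrow> l \<le> m \<longrightarrow> p (\<pi> m) \<le> p (\<pi> l)"
    using sort_perm[of N p] by blast
  have rng: "\<And>i. i \<in> {1..N} \<Longrightarrow> p i \<in> {0..vb}" using L by (simp add: is_LNE_def)
  have pin: "\<And>l. l \<in> {1..N} \<Longrightarrow> \<pi> l \<in> {1..N}" using b by (rule bij_betw_apply)
  have "is_VOP N vb (revenue N K vals Theta f vb) \<pi> p"
    unfolding is_VOP_def
  proof (intro conjI ballI impI)
    show "bij_betw \<pi> {1..N} {1..N}" by (rule b)
  next
    fix i assume "i \<in> {1..N}" then show "p i \<in> {0..vb}" by (rule rng)
  next
    assume "1 \<le> N" then have "p (\<pi> N) \<in> {0..vb}" using rng pin by simp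
    then show "0 \<le> p (\<pi> N)" by simp
  next
    assume "1 \<le> N" then have "p (\<pi> 1) \<in> {0..vb}" using rng pin by simp
    then show "p (\<pi> 1) \<le> vb" by simp
  next
    fix l assume "l \<in> {1..<N}"
    then have "l \<in> {1..N}" "Suc l \<in> {1..N}" "l \<le> Suc l" by auto
    then show "p (\<pi> (Suc l)) \<le> p (\<pi> l)" using mono by blast
  next
    fix l assume l: "l \<in> {1..N}"
    have iS: "\<pi> l \<notin> \<pi> ` {1..<l}"
    proof
      assume "\<pi> l \<in> \<pi> ` {1..<l}"
      then obtain m where m: "m \<in> {1..<l}" "\<pi> l = \<pi> m" by blast
      have "m \<in> {1..N}" using m l by auto
      then have "l = m" using b l m(2) unfolding bij_betw_def inj_on_def by blast
      then show False using m by auto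
    qed
    have hiS: "j \<in> \<pi> ` {1..<l}" if j: "j \<in> {1..N}" "p (\<pi> l) < p j" for j
    proof -
      obtain m where m: "m \<in> {1..N}" "j = \<pi> m" using b j(1) unfolding bij_betw_def by blast
      have "\<not> l \<le> m"
      proof
        assume "l \<le> m"
        then have "p (\<pi> m) \<le> p (\<pi> l)" using mono l m(1) by blast
        then show False using j(2) m(2) by simp
      qed
      then show ?thesis using m by (intro image_eqI[of _ \<pi> m]) auto
    qed
    show "\<exists>\<epsilon>>0. \<forall>x\<in>{0..pmin vb p (\<pi> ` {1..<l})}. \<bar>x - p (\<pi> l)\<bar> < \<epsilon> \<longrightarrow>
          revenue N K vals Theta f vb (\<pi> l) ((prices_on (\<pi> ` {1..<l}) p)(\<pi> l := x))
            \<le> revenue N K vals Theta f vb (\<pi> l) ((prices_on (\<pi> ` {1..<l}) p)(\<pi> l := p (\<pi> l)))"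
      by (rule vop_local[OF C L pin[OF l] iS hiS])
  qed
  then show ?thesis by blast
qed


end
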